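(* Assume the reduced model family is $(\varepsilon,\mu)$-admissible for some $\varepsilon>0$, $\mu\ge1$. Let $u\in V$ with $\operatorname{dist}(u,\mathcal M)\le\varepsilon_{model}$ and $w=P_Wu+\eta$, where $\eta\in W$ and $\|\eta\|\le\varepsilon_{noise}$. Let $u^*=u^*(w)$ be the estimator obtained by surrogate model selection with the surrogate $\mathcal S(v,\mathcal M)=\min_{y\in Y}\mathcal R(v,y)$. Define the alternating minimization sequence as follows: - set $u^0=u^*$ and choose $y^0\in\operatorname{argmin}_{y\in Y}\mathcal R(u^*,y)$; - for $k\ge0$, choose $y^{k+1}\in\operatorname{argmin}_{y\in Y}\mathcal R(u^k,y)$; - for $k\ge0$, let $u^{k+1}$ be the minimizer of $v\mapsto\mathcal R(v,y^{k+1})$ over $v\in w+W^\perp$. Then $\mathcal R(u^{k+1},y^{k+1})\le\mathcal R(u^k,y^k)$ for all $k\ge0$. Moreover, for every $k\ge0$, $$\|u-u^k\|\le\delta_{\kappa\rho}+\varepsilon_{noise},\qquad\rho:=\mu(\varepsilon+\varepsilon_{noise})+(\mu+1)\varepsilon_{model},\quad\kappa=R/r.$$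
   Context: Let $V$ and $Z$ be real Hilbert spaces, with $\|\cdot\|$ the norm of $V$ and $Z'$ the dual of $Z$. Let $Y\subset\mathbb R^d$ be compact. For $y\in Y$ let $A(y):V\to Z'$ be a bounded linear isomorphism and $f(y)\in Z'$, with $y\mapsto A(y)$ and $y\mapsto f(y)$ continuous. Assume there are constants $0<r\le R$ such that $\|A(y)\|_{V\to Z'}\le R$ and $\|A(y)^{-1}\|_{Z'\to V}\le r^{-1}$ for all $y\in Y$. Let $u(y)=A(y)^{-1}f(y)$ and $\mathcal M=\{u(y):y\in Y\}$. Define the residual $\mathcal R(v,y)=\|A(y)v-f(y)\|_{Z'}$. Let $W\subset V$ be a subspace of finite dimension $m$, let $P_W$ be the orthogonal projection onto $W$, and let $W^\perp$ be its orthogonal complement. For $w\in W$ put $V_w=w+W^\perp$. For $\sigma\ge0$ define $\mathcal M_\sigma=\{v:\operatorname{dist}(v,\mathcal M)\le\sigma\}$ and $\delta_\sigma=\sup\{\|u-v\|:u,v\in\mathcal M_\sigma,u-v\in W^\perp\}$. For a finite-dimensional subspace $E$ let $\mu(E,W)=\sup_{v\in E\setminus\{0\}}\|v\|/\|P_Wv\|$, with $\mu(\{0\},W)=1$. A reduced model family consists of: - sets $\mathcal M_1,\dots,\mathcal M_K$ with $\mathcal M=\bigcup_k\mathcal M_k$; - affine spaces $V_k=\bar u_k+\bar V_k$ with $\dim\bar V_k\le m$; - numbers $\varepsilon_k\ge\sup_{u\in\mathcal M_k}\operatorname{dist}(u,V_k)$; - constants $\mu_k=\mu(\bar V_k,W)$.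 The family is $(\varepsilon,\mu)$-admissible if $\varepsilon_k\le\varepsilon$ and $\mu_k\le\mu$ for all $k$. PBDW estimators: $u_k^*(w)=\operatorname{argmin}\{\operatorname{dist}(v,V_k):v\in V_w\}$. Surrogate model selection picks $k^*(w)$ as a minimizer of $k\mapsto\mathcal S(u_k^*(w),\mathcal M)$ and sets $u^*(w)=u^*_{k^*(w)}(w)$. *)

theory Defs
  imports "HOL-Analysis.Analysis"
begin

definition fin_dim_subspace :: "'v::real_vector set \<Rightarrow> bool" where
  "fin_dim_subspace E \<longleftrightarrow> subspace E \<and> (\<exists>B. finite B \<and> E = span B)"

definition proj :: "'v::real_inner set \<Rightarrow> 'v \<Rightarrow> 'v" where
  "proj W v = (THE p. p \<in> W \<and> (\<forall>x\<in>W. inner (v - p) x = 0))"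

definition affW :: "'v::real_inner set \<Rightarrow> 'v \<Rightarrow> 'v set" where
  "affW W w = {w + x | x. x \<in> orthogonal_comp W}"

definition mu_const :: "'v::real_inner set \<Rightarrow> 'v set \<Rightarrow> ereal" where
  "mu_const E W = (if E \<subseteq> {0} then 1
     else (SUP v\<in>E - {0}. (if proj W v = 0 then \<infinity> else ereal (norm v / norm (proj W v)))))"

definition resid :: "('a \<Rightarrow> 'v::real_normed_vector \<Rightarrow>\<^sub>L 'z::real_normed_vector) \<Rightarrow> ('a \<Rightarrow> 'z) \<Rightarrow> 'v \<Rightarrow> 'a \<Rightarrow> real" where
  "resid A f v y = norm (A y v - f y)"

definition solman :: "'a set \<Rightarrow> ('a \<Rightarrow> 'v::real_normed_vector \<Rightarrow>\<^sub>L 'z::real_normed_vector) \<Rightarrow> ('a \<Rightarrow> 'z) \<Rightarrow> 'v set" where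
  "solman Y A f = {u. \<exists>y\<in>Y. A y u = f y}"

definition surrogate :: "'a set \<Rightarrow> ('a \<Rightarrow> 'v::real_normed_vector \<Rightarrow>\<^sub>L 'z::real_normed_vector) \<Rightarrow> ('a \<Rightarrow> 'z) \<Rightarrow> 'v \<Rightarrow> real" where
  "surrogate Y A f v = (INF y\<in>Y. resid A f v y)"

definition Msig :: "'v::real_normed_vector set \<Rightarrow> real \<Rightarrow> 'v set" where
  "Msig M \<sigma> = {v. infdist v M \<le> \<sigma>}"

definition delta :: "'v::real_inner set \<Rightarrow> 'v set \<Rightarrow> real \<Rightarrow> real" where
  "delta M W \<sigma> = Sup {norm (u - v) | u v. u \<in> Msig M \<sigma> \<and> v \<in> Msig M \<sigma> \<and> u - v \<in> orthogonal_comp W}"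

end

theory Submission
  imports Defs
begin


lemma proj_exists_span:
  fixes B :: "'v::real_inner set"
  assumes "finite B"
  shows "\<exists>p\<in>span B. \<forall>x\<in>span B. inner (v - p) x = 0"
  using assms
proof (induction B arbitrary: v rule: finite_induct)
  case empty
  show ?case by (intro bexI[of _ 0]) auto
next
  case (insert b B)
  obtain pb where pb: "pb \<in> span B" "\<forall>x\<in>span B. inner (b - pb) x = 0" using insert.IH by blast
  define b' where "b' = b - pb"
  obtain pv where pv: "pv \<in> span B" "\<forall>x\<in>span B. inner (v - pv) x = 0" using insert.IH by blast
  define c where "c = inner v b' / inner b' b'"
  define p where "p = pv + c *\<^sub>R b'"
  have sub: "span B \<subseteq> span (insert b B)" by (simp add: span_mono subset_insertI)
  have b'span: "b' \<in> span (insert b B)" unfolding b'_def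
    using pb(1) sub by (meson insertI1 span_base span_diff subsetD)
  have pin: "p \<in> span (insert b B)" unfolding p_def
    using pv(1) sub b'span by (meson span_add span_scale subsetD)
  have b'orth: "\<And>y. y \<in> span B \<Longrightarrow> inner b' y = 0" using pb(2) b'_def by blast
  have o1: "inner (v - p) y = 0" if "y \<in> span B" for y
    using pv(2) b'orth[OF that] that by (simp add: p_def inner_diff_left inner_add_left algebra_simps)
  have pvb': "inner pv b' = 0" using b'orth[OF pv(1)] by (simp add: inner_commute)
  have o3: "inner (v - p) b' = 0"
  proof (cases "inner b' b' = 0")
    case True then have "b' = 0" by simp
    then show ?thesis by simp
  next
    case False
    then show ?thesis using pvb' by (simp add: p_def c_def inner_diff_left inner_add_left)
  qed
  have o2: "inner (v - p) b = 0"
  proof -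
    have "b = b' + pb" by (simp add: b'_def)
    then have "inner (v - p) b = inner (v - p) b' + inner (v - p) pb" by (metis inner_add_right)
    then show ?thesis using o3 o1[OF pb(1)] by simp
  qed
  have "\<forall>x\<in>span (insert b B). inner (v - p) x = 0"
  proof
    fix x assume "x \<in> span (insert b B)"
    then obtain k where k: "x - k *\<^sub>R b \<in> span B" using span_insert by blast
    have "x = (x - k *\<^sub>R b) + k *\<^sub>R b" by simp
    then have "inner (v - p) x = inner (v - p) (x - k *\<^sub>R b) + k * inner (v - p) b"
      by (metis inner_add_right inner_scaleR_right)
    then show "inner (v - p) x = 0" using o1[OF k] o2 by simp
  qed
  then show ?case using pin by blast
qed

lemma proj_char:
  assumes E: "fin_dim_subspace E"
  shows "proj E v \<in> E \<and> (\<forall>x\<in>E. inner (v - proj E v) x = 0)"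
proof -
  obtain B where B: "finite B" "E = span B" using E unfolding fin_dim_subspace_def by blast
  obtain p where p: "p \<in> E" "\<forall>x\<in>E. inner (v - p) x = 0" using proj_exists_span[OF B(1)] B(2) by blast
  have uniq: "q = p" if q: "q \<in> E" "\<forall>x\<in>E. inner (v - q) x = 0" for q
  proof -
    have d: "p - q \<in> E" using p(1) q(1) B(2) by (simp add: span_diff)
    have "inner (p - q) (p - q) = inner (v - q) (p - q) - inner (v - p) (p - q)"
      by (simp add: inner_diff_left)
    also have "\<dots> = 0" using d p(2) q(2) by simp
    finally show ?thesis by simp
  qed
  have "proj E v = p" unfolding proj_def
    apply (rule the_equality)
    using p apply blast
    using uniq apply blast
    done
  then show ?thesis using p by simp
qed

lemma fds_subspace: "fin_dim_subspace E \<Longrightarrow> subspace E" unfolding fin_dim_subspace_def by blast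

lemma proj_unique:
  assumes E: "fin_dim_subspace E" and p: "p \<in> E" and po: "\<forall>x\<in>E. inner (v - p) x = 0"
  shows "proj E v = p"
proof -
  have c1: "proj E v \<in> E" using proj_char[OF E] by blast
  have c2: "\<forall>x\<in>E. inner (v - proj E v) x = 0" using proj_char[OF E] by blast
  have d: "p - proj E v \<in> E" using subspace_diff[OF fds_subspace[OF E] p c1] .
  have e1: "inner (v - proj E v) (p - proj E v) = 0" using c2 d by blast
  have e2: "inner (v - p) (p - proj E v) = 0" using po d by blast
  have "p - proj E v = (v - proj E v) - (v - p)" by simp
  then have "inner (p - proj E v) (p - proj E v) = inner (v - proj E v) (p - proj E v) - inner (v - p) (p - proj E v)"
    by (metis inner_diff_left)
  then have "inner (p - proj E v) (p - proj E v) = 0" using e1 e2 by linarith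
  then show ?thesis by simp
qed

lemma proj_in: "fin_dim_subspace E \<Longrightarrow> proj E v \<in> E" using proj_char by blast
lemma proj_orth: "fin_dim_subspace E \<Longrightarrow> x \<in> E \<Longrightarrow> inner (v - proj E v) x = 0" using proj_char by blast

lemma proj_diff:
  assumes E: "fin_dim_subspace E"
  shows "proj E (a - b) = proj E a - proj E b"
proof (rule proj_unique[OF E])
  show "proj E a - proj E b \<in> E" using proj_in[OF E] fds_subspace[OF E] by (simp add: subspace_diff)
  show "\<forall>x\<in>E. inner (a - b - (proj E a - proj E b)) x = 0"
  proof
    fix x assume x: "x \<in> E"
    have "a - b - (proj E a - proj E b) = (a - proj E a) - (b - proj E b)" by simp
    moreover have "inner (a - proj E a) x = 0" "inner (b - proj E b) x = 0" using proj_orth[OF E x] by blast+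
    ultimately show "inner (a - b - (proj E a - proj E b)) x = 0"
      by (simp only: inner_diff_left)
  qed
qed

lemma proj_add:
  assumes E: "fin_dim_subspace E"
  shows "proj E (a + b) = proj E a + proj E b"
proof (rule proj_unique[OF E])
  show "proj E a + proj E b \<in> E" using proj_in[OF E] fds_subspace[OF E] by (simp add: subspace_add)
  show "\<forall>x\<in>E. inner (a + b - (proj E a + proj E b)) x = 0"
  proof
    fix x assume x: "x \<in> E"
    have "a + b - (proj E a + proj E b) = (a - proj E a) + (b - proj E b)" by simp
    then show "inner (a + b - (proj E a + proj E b)) x = 0"
      by (simp only: inner_add_left proj_orth[OF E x])
  qed
qed

lemma proj_id: "fin_dim_subspace E \<Longrightarrow> x \<in> E \<Longrightarrow> proj E x = x"
  by (rule proj_unique) simp_all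

lemma proj_perp_inner:
  assumes E: "fin_dim_subspace E" and "a \<in> E"
  shows "inner a x = inner a (proj E x)"
proof -
  have "inner (x - proj E x) a = 0" using proj_orth[OF E assms(2)] .
  then show ?thesis by (simp add: inner_diff_left inner_diff_right inner_commute)
qed

lemma pyth:
  assumes "inner a b = 0"
  shows "(norm (a + b))\<^sup>2 = (norm a)\<^sup>2 + (norm b)\<^sup>2"
  by (rule norm_add_Pythagorean) (simp add: orthogonal_def assms)

lemma proj_pyth:
  assumes E: "fin_dim_subspace E"
  shows "(norm v)\<^sup>2 = (norm (proj E v))\<^sup>2 + (norm (v - proj E v))\<^sup>2"
proof -
  have "inner (v - proj E v) (proj E v) = 0" using proj_orth[OF E proj_in[OF E]] .
  then have "inner (proj E v) (v - proj E v) = 0" by (simp only: inner_commute)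
  then have "(norm (proj E v + (v - proj E v)))\<^sup>2 = (norm (proj E v))\<^sup>2 + (norm (v - proj E v))\<^sup>2"
    by (rule pyth)
  then show ?thesis by simp
qed

lemma proj_norm_le:
  assumes E: "fin_dim_subspace E" shows "norm (proj E v) \<le> norm v"
proof -
  have "(norm (proj E v))\<^sup>2 \<le> (norm v)\<^sup>2" using proj_pyth[OF E, of v] by simp
  then show ?thesis by (rule power2_le_imp_le) simp
qed



lemma arith_core:
  fixes \<alpha> \<beta> \<pi> \<gamma> n e X Dn T \<mu> :: real
  assumes "e\<^sup>2 = \<beta>\<^sup>2 + \<alpha>\<^sup>2" "X\<^sup>2 = \<pi>\<^sup>2 + \<gamma>\<^sup>2" "X \<le> \<mu> * \<pi>" "\<pi> \<le> n + \<beta>" "T \<le> \<alpha> + \<gamma>"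
    "Dn\<^sup>2 = n\<^sup>2 + T\<^sup>2" "0 \<le> \<alpha>" "0 \<le> \<beta>" "0 \<le> \<pi>" "0 \<le> \<gamma>" "0 \<le> n" "0 \<le> e" "0 \<le> X" "0 \<le> T" "0 \<le> Dn"
    "1 \<le> \<mu>"
  shows "Dn \<le> \<mu> * (e + n)"
proof -
  define s where "s = sqrt (\<mu>\<^sup>2 - 1)"
  have s0: "0 \<le> s" using assms(16) by (simp add: s_def)
  have s2: "s\<^sup>2 = \<mu>\<^sup>2 - 1" using assms(16) by (simp add: s_def)
  have "\<gamma>\<^sup>2 \<le> (s * \<pi>)\<^sup>2"
  proof -
    have "X\<^sup>2 \<le> (\<mu> * \<pi>)\<^sup>2" using assms(3,13) by (simp add: power_mono)
    then have "\<gamma>\<^sup>2 + \<pi>\<^sup>2 \<le> \<mu>\<^sup>2 * \<pi>\<^sup>2" using assms(2) by (simp add: power_mult_distrib)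
    moreover have "\<mu>\<^sup>2 = 1 + s\<^sup>2" using s2 by simp
    ultimately have "\<gamma>\<^sup>2 + \<pi>\<^sup>2 \<le> (1 + s\<^sup>2) * \<pi>\<^sup>2" by simp
    then show ?thesis by (simp add: power_mult_distrib algebra_simps)
  qed
  then have g: "\<gamma> \<le> s * \<pi>" using s0 assms(9) by (meson mult_nonneg_nonneg power2_le_imp_le)
  have "s * \<pi> \<le> s * (n + \<beta>)" using s0 assms(4) by (simp add: mult_left_mono)
  then have T1: "T \<le> (\<alpha> + s * \<beta>) + s * n" using g assms(5) by (simp add: algebra_simps)
  have "(\<alpha> + s * \<beta>)\<^sup>2 \<le> (\<mu> * e)\<^sup>2"
  proof -
    have "(\<alpha> + s * \<beta>)\<^sup>2 \<le> (\<alpha> + s * \<beta>)\<^sup>2 + (s * \<alpha> - \<beta>)\<^sup>2" by simp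
    also have "\<dots> = (\<alpha>\<^sup>2 + \<beta>\<^sup>2) * (1 + s\<^sup>2)" by (simp add: power2_eq_square algebra_simps)
    also have "\<dots> = (\<mu> * e)\<^sup>2" using assms(1) s2 by (simp add: power_mult_distrib algebra_simps)
    finally show ?thesis .
  qed
  then have "\<alpha> + s * \<beta> \<le> \<mu> * e" using assms(7,8,12,16) s0 by (meson mult_nonneg_nonneg power2_le_imp_le order_trans zero_le_one)
  then have T2: "T \<le> \<mu> * e + s * n" using T1 by linarith
  have sm: "s \<le> \<mu>"
  proof -
    have "s\<^sup>2 \<le> \<mu>\<^sup>2" using s2 by simp
    then show ?thesis using assms(16) by (meson power2_le_imp_le order_trans zero_le_one)
  qed
  have "T\<^sup>2 \<le> (\<mu> * e + s * n)\<^sup>2" using T2 assms(14) by (simp add: power_mono)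
  then have "Dn\<^sup>2 \<le> n\<^sup>2 + (\<mu> * e + s * n)\<^sup>2" using assms(6) by simp
  also have "\<dots> = \<mu>\<^sup>2 * e\<^sup>2 + 2 * \<mu> * s * e * n + (1 + s\<^sup>2) * n\<^sup>2"
    by (simp add: power2_eq_square algebra_simps)
  also have "\<dots> = \<mu>\<^sup>2 * e\<^sup>2 + 2 * \<mu> * s * e * n + \<mu>\<^sup>2 * n\<^sup>2"
    using s2 by simp
  also have "\<dots> \<le> \<mu>\<^sup>2 * e\<^sup>2 + 2 * \<mu> * \<mu> * e * n + \<mu>\<^sup>2 * n\<^sup>2"
  proof -
    have "\<mu> * s * (e * n) \<le> \<mu> * \<mu> * (e * n)"
      using sm assms(11,12,16) by (intro mult_right_mono mult_left_mono) auto
    then show ?thesis by (simp add: algebra_simps)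
  qed
  also have "\<dots> = (\<mu> * (e + n))\<^sup>2" by (simp add: power2_eq_square algebra_simps)
  finally have "Dn\<^sup>2 \<le> (\<mu> * (e + n))\<^sup>2" .
  then show ?thesis using assms(11,12,16) by (meson power2_le_imp_le add_nonneg_nonneg mult_nonneg_nonneg order_trans zero_le_one)
qed

lemma inner_zero_from_min:
  fixes a b :: "'v::real_inner"
  assumes "\<forall>t::real. (norm a)\<^sup>2 \<le> (norm (a - t *\<^sub>R b))\<^sup>2"
  shows "inner a b = 0"
proof (cases "b = 0")
  case True then show ?thesis by simp
next
  case False
  define t where "t = inner a b / inner b b"
  have bb: "inner b b > 0" using False by simp
  have "(norm (a - t *\<^sub>R b))\<^sup>2 = inner a a - 2 * t * inner a b + t * t * inner b b"
    by (simp add: power2_norm_eq_inner inner_diff_left inner_diff_right inner_commute algebra_simps)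
  also have "\<dots> = inner a a - (inner a b)\<^sup>2 / inner b b"
    using bb by (simp add: t_def power2_eq_square field_simps)
  finally have "(norm a)\<^sup>2 \<le> inner a a - (inner a b)\<^sup>2 / inner b b" using assms by metis
  then have "(inner a b)\<^sup>2 / inner b b \<le> 0" by (simp add: power2_norm_eq_inner)
  then have "(inner a b)\<^sup>2 \<le> 0" using bb by (simp add: divide_le_0_iff)
  then show ?thesis by simp
qed



lemma proj_scale:
  assumes E: "fin_dim_subspace E"
  shows "proj E (t *\<^sub>R a) = t *\<^sub>R proj E a"
proof (rule proj_unique[OF E])
  show "t *\<^sub>R proj E a \<in> E" using proj_in[OF E] fds_subspace[OF E] by (simp add: subspace_scale)
  show "\<forall>x\<in>E. inner (t *\<^sub>R a - t *\<^sub>R proj E a) x = 0"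
  proof
    fix x assume x: "x \<in> E"
    have "t *\<^sub>R a - t *\<^sub>R proj E a = t *\<^sub>R (a - proj E a)" by (simp add: scaleR_diff_right)
    then show "inner (t *\<^sub>R a - t *\<^sub>R proj E a) x = 0" using proj_orth[OF E x] by simp
  qed
qed

lemma closest_aff:
  assumes E: "fin_dim_subspace E"
  shows "c + proj E (v - c) \<in> {c + x | x. x \<in> E}"
    and "infdist v {c + x | x. x \<in> E} = norm (v - (c + proj E (v - c)))"
proof -
  let ?V = "{c + x | x. x \<in> E}"
  let ?z = "c + proj E (v - c)"
  show zin: "?z \<in> ?V" using proj_in[OF E] by blast
  have low: "norm (v - ?z) \<le> dist v z'" if zV: "z' \<in> ?V" for z'
  proof -
    obtain x' where x': "x' \<in> E" "z' = c + x'" using zV by blast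
    have d: "proj E (v - c) - x' \<in> E" using proj_in[OF E] x'(1) fds_subspace[OF E] by (simp add: subspace_diff)
    have "v - z' = (v - ?z) + (proj E (v - c) - x')" using x'(2) by simp
    moreover have "inner (v - ?z) (proj E (v - c) - x') = 0"
    proof -
      have eq: "v - ?z = (v - c) - proj E (v - c)" by simp
      have "inner ((v - c) - proj E (v - c)) (proj E (v - c) - x') = 0" by (rule proj_orth[OF E d])
      then show ?thesis by (simp only: eq)
    qed
    ultimately have "(norm (v - z'))\<^sup>2 = (norm (v - ?z))\<^sup>2 + (norm (proj E (v - c) - x'))\<^sup>2"
      by (simp only: pyth)
    then have "(norm (v - ?z))\<^sup>2 \<le> (norm (v - z'))\<^sup>2" by simp
    then have "norm (v - ?z) \<le> norm (v - z')" by (rule power2_le_imp_le) simp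
    then show ?thesis by (simp add: dist_norm)
  qed
  have ne: "?V \<noteq> {}" using zin by blast
  have "norm (v - ?z) \<le> (INF a\<in>?V. dist v a)" using ne low by (rule cINF_greatest)
  then have "infdist v ?V \<ge> norm (v - ?z)" by (simp only: infdist_def if_not_P[OF ne])
  moreover have "infdist v ?V \<le> norm (v - ?z)" using infdist_le[OF zin, of v] by (simp add: dist_norm)
  ultimately show "infdist v ?V = norm (v - ?z)" by simp
qed

lemma mu_bound:
  assumes mu: "mu_const E W \<le> ereal \<mu>" and x: "x \<in> E" and mu1: "\<mu> \<ge> 1"
  shows "norm x \<le> \<mu> * norm (proj W x)"
proof (cases "x = 0")
  case True then show ?thesis using mu1 by simp
next
  case False
  then have nE: "\<not> E \<subseteq> {0}" using x by blast
  have xm: "x \<in> E - {0}" using x False by simp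
  let ?g = "\<lambda>v. (if proj W v = 0 then \<infinity> else ereal (norm v / norm (proj W v)))"
  have "?g x \<le> (SUP v\<in>E - {0}. ?g v)" using xm by (rule SUP_upper)
  also have "\<dots> = mu_const E W" using nE by (simp add: mu_const_def)
  finally have gx: "?g x \<le> ereal \<mu>" using mu by (rule order_trans)
  then have p0: "proj W x \<noteq> 0" by (cases "proj W x = 0") auto
  then have "norm x / norm (proj W x) \<le> \<mu>" using gx by simp
  then show ?thesis using p0 by (simp add: divide_le_eq mult.commute)
qed



lemma pbdw:
  fixes W E :: "'v::real_inner set"
  assumes W: "fin_dim_subspace W" and E: "fin_dim_subspace E"
    and mu: "\<forall>x\<in>E. norm x \<le> \<mu> * norm (proj W x)" and mu1: "1 \<le> \<mu>"
    and wW: "w \<in> W"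
    and us: "us \<in> affW W w"
    and usmin: "\<forall>v\<in>affW W w. infdist us {c + x | x. x \<in> E} \<le> infdist v {c + x | x. x \<in> E}"
  shows "norm (v - us) \<le> \<mu> * (infdist v {c + x | x. x \<in> E} + norm (proj W v - w))"
proof -
  let ?V = "{c + x | x. x \<in> E}"
  let ?P = "proj W"
  have sW: "subspace W" using fds_subspace[OF W] .
  have sE: "subspace E" using fds_subspace[OF E] .
  have perpW: "y - ?P y \<in> orthogonal_comp W" for y
  proof -
    have "\<forall>y'\<in>W. orthogonal y' (y - ?P y)"
      using proj_orth[OF W] by (simp add: orthogonal_def inner_commute)
    then show ?thesis unfolding orthogonal_comp_def by blast
  qed
  have aff_mem: "w + ov \<in> affW W w" if "ov \<in> orthogonal_comp W" for ov
    unfolding affW_def using that by blast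
  obtain ov where o: "ov \<in> orthogonal_comp W" "us = w + ov" using us unfolding affW_def by blast
  have Pus: "?P us = w"
  proof (rule proj_unique[OF W wW])
    show "\<forall>x\<in>W. inner (us - w) x = 0"
      using o unfolding orthogonal_comp_def orthogonal_def by (simp add: inner_commute)
  qed
  define z where "z = c + proj E (us - c)"
  have zV: "z \<in> ?V" unfolding z_def by (rule closest_aff(1)[OF E])
  have dz: "infdist us ?V = norm (us - z)" unfolding z_def by (rule closest_aff(2)[OF E])
  have star: "infdist us ?V \<le> norm (w - ?P z')" if z'V: "z' \<in> ?V" for z'
  proof -
    have e: "z' + (w - ?P z') = w + (z' - ?P z')" by simp
    have mem: "z' + (w - ?P z') \<in> affW W w" unfolding e by (rule aff_mem[OF perpW[of z']])
    have "infdist (z' + (w - ?P z')) ?V \<le> dist (z' + (w - ?P z')) z'" by (rule infdist_le[OF z'V])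
    also have "\<dots> = norm (w - ?P z')" by (simp add: dist_norm)
    finally show ?thesis using usmin mem by (meson order_trans)
  qed
  define a where "a = w - ?P z"
  have aW: "a \<in> W" unfolding a_def using wW proj_in[OF W] sW by (simp add: subspace_diff)
  have Pusz: "?P (us - z) = a" using proj_diff[OF W, of us z] Pus a_def by simp
  have py: "(norm (us - z))\<^sup>2 = (norm a)\<^sup>2 + (norm (us - z - a))\<^sup>2"
    using proj_pyth[OF W, of "us - z"] Pusz by simp
  have le: "norm (us - z) \<le> norm a" using star[OF zV] dz a_def by simp
  have "(norm (us - z))\<^sup>2 \<le> (norm a)\<^sup>2" using le by (simp add: power_mono)
  then have "(norm (us - z - a))\<^sup>2 \<le> 0" using py by simp
  then have "us - z - a = 0" by simp
  then have usz: "us = z + a" by (simp add: algebra_simps)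
  have aperp: "inner a (?P x) = 0" if xE: "x \<in> E" for x
  proof -
    have "\<forall>t::real. (norm a)\<^sup>2 \<le> (norm (a - t *\<^sub>R ?P x))\<^sup>2"
    proof
      fix t :: real
      have "proj E (us - c) + t *\<^sub>R x \<in> E" using proj_in[OF E] xE sE by (simp add: subspace_add subspace_scale)
      then have "c + (proj E (us - c) + t *\<^sub>R x) \<in> ?V" by blast
      then have mem: "z + t *\<^sub>R x \<in> ?V" by (simp add: z_def add.assoc)
      have eq: "w - ?P (z + t *\<^sub>R x) = a - t *\<^sub>R ?P x"
        by (simp add: proj_add[OF W] proj_scale[OF W] a_def)
      have "norm a \<le> norm (a - t *\<^sub>R ?P x)" using star[OF mem] dz le usz eq by simp
      then show "(norm a)\<^sup>2 \<le> (norm (a - t *\<^sub>R ?P x))\<^sup>2" by (simp add: power_mono)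
    qed
    then show ?thesis by (rule inner_zero_from_min)
  qed
  define zv where "zv = c + proj E (v - c)"
  define g where "g = v - zv"
  have ge: "infdist v ?V = norm g" unfolding g_def zv_def by (rule closest_aff(2)[OF E])
  define x where "x = zv - z"
  have xE: "x \<in> E" unfolding x_def zv_def z_def using proj_in[OF E] sE by (simp add: subspace_diff)
  define q where "q = ?P v - w"
  have D: "v - us = g + x - a" unfolding g_def x_def using usz by (simp add: algebra_simps)
  have PD: "?P (v - us) = q" using proj_diff[OF W, of v us] Pus q_def by simp
  have PD2: "?P (v - us) = ?P g + ?P x - a"
    using D proj_add[OF W] proj_diff[OF W] proj_id[OF W aW] by simp
  have Pxeq: "?P x = (q - ?P g) + a" using PD PD2 by (simp add: algebra_simps)
  have Pxle: "norm (?P x) \<le> norm q + norm (?P g)"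
  proof -
    have "(norm (?P x))\<^sup>2 = inner (?P x) (?P x)" by (simp add: power2_norm_eq_inner)
    also have "\<dots> = inner (?P x) (q - ?P g) + inner (?P x) a"
      by (subst (2) Pxeq) (simp only: inner_add_right)
    also have "inner (?P x) a = 0" using aperp[OF xE] by (simp add: inner_commute)
    also have "inner (?P x) (q - ?P g) \<le> norm (?P x) * norm (q - ?P g)" by (rule norm_cauchy_schwarz)
    finally have h: "(norm (?P x))\<^sup>2 \<le> norm (?P x) * norm (q - ?P g)" by simp
    have "norm (?P x) \<le> norm (q - ?P g)"
    proof (cases "norm (?P x) = 0")
      case True then show ?thesis by simp
    next
      case False
      then have "0 < norm (?P x)" by simp
      then show ?thesis using h by (simp add: power2_eq_square)
    qed
    also have "\<dots> \<le> norm q + norm (?P g)" by (rule norm_triangle_ineq4)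
    finally show ?thesis .
  qed
  have "v - us - ?P (v - us) = (g + x - a) - (?P g + ?P x - a)"
    by (subst PD2, subst D, rule refl)
  also have "\<dots> = (g - ?P g) + (x - ?P x)" by (simp add: algebra_simps)
  finally have resid: "v - us - ?P (v - us) = (g - ?P g) + (x - ?P x)" .
  have "norm (v - us) \<le> \<mu> * (norm g + norm q)"
  proof (rule arith_core)
    show "(norm g)\<^sup>2 = (norm (?P g))\<^sup>2 + (norm (g - ?P g))\<^sup>2" by (rule proj_pyth[OF W])
    show "(norm x)\<^sup>2 = (norm (?P x))\<^sup>2 + (norm (x - ?P x))\<^sup>2" by (rule proj_pyth[OF W])
    show "norm x \<le> \<mu> * norm (?P x)" using mu xE by blast
    show "norm (?P x) \<le> norm q + norm (?P g)" by (rule Pxle)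
    show "norm ((g - ?P g) + (x - ?P x)) \<le> norm (g - ?P g) + norm (x - ?P x)" by (rule norm_triangle_ineq)
    show "(norm (v - us))\<^sup>2 = (norm q)\<^sup>2 + (norm ((g - ?P g) + (x - ?P x)))\<^sup>2"
      using proj_pyth[OF W, of "v - us"] PD resid by simp
  qed (use mu1 in auto)
  then show ?thesis using ge q_def by simp
qed



theorem mainTheorem9:
  fixes Y :: "'a::euclidean_space set"
    and A :: "'a \<Rightarrow> ('v::{real_inner,complete_space} \<Rightarrow>\<^sub>L 'z::{real_inner,complete_space})"
    and f :: "'a \<Rightarrow> 'z"
    and r R :: real
    and W :: "'v set" and m :: nat
    and K :: nat
    and Mk :: "nat \<Rightarrow> 'v set" and ubar :: "nat \<Rightarrow> 'v" and Vbar :: "nat \<Rightarrow> 'v set"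
    and epsk :: "nat \<Rightarrow> real"
    and \<epsilon> \<mu> :: real
    and u \<eta> w :: 'v
    and eps_model eps_noise :: real
    and ustark :: "nat \<Rightarrow> 'v" and kstar :: nat
    and useq :: "nat \<Rightarrow> 'v" and yseq :: "nat \<Rightarrow> 'a"
  assumes Y_compact: "compact Y" and Y_ne: "Y \<noteq> {}"
    and A_cont: "continuous_on Y A" and f_cont: "continuous_on Y f"
    and rR: "0 < r" "r \<le> R"
    and A_bound: "\<forall>y\<in>Y. norm (A y) \<le> R"
    and A_iso: "\<forall>y\<in>Y. \<exists>B :: ('z \<Rightarrow>\<^sub>L 'v). (\<forall>v. blinfun_apply B (A y v) = v) \<and> (\<forall>z. A y (blinfun_apply B z) = z) \<and> norm B \<le> inverse r"
    and W_sub: "fin_dim_subspace W" and W_dim: "dim W = m"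
    (* reduced model family *)
    and family_union: "solman Y A f = (\<Union>k\<in>{1..K}. Mk k)"
    and Vbar_sub: "\<forall>k\<in>{1..K}. fin_dim_subspace (Vbar k) \<and> dim (Vbar k) \<le> m"
    and epsk_bound: "\<forall>k\<in>{1..K}. \<forall>v\<in>Mk k. infdist v {ubar k + x | x. x \<in> Vbar k} \<le> epsk k"
    (* (eps,mu)-admissibility *)
    and eps_pos: "\<epsilon> > 0" and mu_ge: "\<mu> \<ge> 1"
    and admissible: "\<forall>k\<in>{1..K}. epsk k \<le> \<epsilon> \<and> mu_const (Vbar k) W \<le> ereal \<mu>"
    (* data *)
    and u_model: "infdist u (solman Y A f) \<le> eps_model"
    and eta_W: "\<eta> \<in> W" and eta_noise: "norm \<eta> \<le> eps_noise"
    and w_def: "w = proj W u + \<eta>"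
    (* PBDW estimators u_k^*(w) *)
    and ustark_def: "\<forall>k\<in>{1..K}. ustark k \<in> affW W w \<and>
        (\<forall>v\<in>affW W w. infdist (ustark k) {ubar k + x | x. x \<in> Vbar k}
                          \<le> infdist v {ubar k + x | x. x \<in> Vbar k})"
    (* surrogate model selection *)
    and kstar_def: "kstar \<in> {1..K} \<and>
        (\<forall>k\<in>{1..K}. surrogate Y A f (ustark kstar) \<le> surrogate Y A f (ustark k))"
    (* alternating minimization *)
    and u0: "useq 0 = ustark kstar"
    and y0: "yseq 0 \<in> Y \<and> (\<forall>y\<in>Y. resid A f (ustark kstar) (yseq 0) \<le> resid A f (ustark kstar) y)"
    and ystep: "\<forall>k. yseq (Suc k) \<in> Y \<and> (\<forall>y\<in>Y. resid A f (useq k) (yseq (Suc k)) \<le> resid A f (useq k) y)"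
    and ustep: "\<forall>k. useq (Suc k) \<in> affW W w \<and>
        (\<forall>v\<in>affW W w. resid A f (useq (Suc k)) (yseq (Suc k)) \<le> resid A f v (yseq (Suc k)))"
  shows "(\<forall>k. resid A f (useq (Suc k)) (yseq (Suc k)) \<le> resid A f (useq k) (yseq k)) \<and>
         (\<forall>k. norm (u - useq k) \<le>
            delta (solman Y A f) W ((R / r) * (\<mu> * (\<epsilon> + eps_noise) + (\<mu> + 1) * eps_model)) + eps_noise)"
proof -
  let ?M = "solman Y A f"
  let ?P = "proj W"
  define \<rho> where "\<rho> = \<mu> * (\<epsilon> + eps_noise) + (\<mu> + 1) * eps_model"
  have em0: "0 \<le> eps_model" using u_model infdist_nonneg order_trans by blast
  have en0: "0 \<le> eps_noise" using eta_noise norm_ge_zero order_trans by blast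
  have sW: "subspace W" using fds_subspace[OF W_sub] .
  have wW: "w \<in> W" unfolding w_def using proj_in[OF W_sub] eta_W sW by (simp add: subspace_add)
  have perpW: "y - ?P y \<in> orthogonal_comp W" for y
  proof -
    have "\<forall>y'\<in>W. orthogonal y' (y - ?P y)"
      using proj_orth[OF W_sub] by (simp add: orthogonal_def inner_commute)
    then show ?thesis unfolding orthogonal_comp_def by blast
  qed
  have uaff: "useq k \<in> affW W w" for k
  proof (cases k)
    case 0 then show ?thesis using u0 ustark_def kstar_def by simp
  next
    case (Suc j) then show ?thesis using ustep by simp
  qed
  have yY: "yseq k \<in> Y" for k
  proof (cases k)
    case 0 then show ?thesis using y0 by simp
  next
    case (Suc j) then show ?thesis using ystep by simp
  qed
  have mono: "resid A f (useq (Suc k)) (yseq (Suc k)) \<le> resid A f (useq k) (yseq k)" for k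
  proof -
    have "resid A f (useq (Suc k)) (yseq (Suc k)) \<le> resid A f (useq k) (yseq (Suc k))"
      using ustep uaff by blast
    also have "\<dots> \<le> resid A f (useq k) (yseq k)" using ystep yY by blast
    finally show ?thesis .
  qed
  have to0: "resid A f (useq k) (yseq k) \<le> resid A f (useq 0) (yseq 0)" for k
  proof (induction k)
    case 0 then show ?case by simp
  next
    case (Suc k) then show ?case using mono[of k] by linarith
  qed
  have Binv: "\<And>y. y \<in> Y \<Longrightarrow> \<exists>B :: ('z \<Rightarrow>\<^sub>L 'v). (\<forall>v. blinfun_apply B (A y v) = v) \<and> (\<forall>z. A y (blinfun_apply B z) = z) \<and> norm B \<le> inverse r"
    using A_iso by blast
  have dist_bound: "infdist v ?M \<le> resid A f v y / r" if yY': "y \<in> Y" for v y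
  proof -
    obtain B :: "'z \<Rightarrow>\<^sub>L 'v" where B: "\<forall>v. blinfun_apply B (A y v) = v" "\<forall>z. A y (blinfun_apply B z) = z" "norm B \<le> inverse r"
      using Binv[OF yY'] by blast
    have mem: "blinfun_apply B (f y) \<in> ?M" unfolding solman_def using B(2) yY' by blast
    have "v - blinfun_apply B (f y) = blinfun_apply B (A y v - f y)" using B(1) by (simp add: blinfun.diff_right)
    then have "norm (v - blinfun_apply B (f y)) \<le> norm B * norm (A y v - f y)" by (simp add: norm_blinfun)
    also have "\<dots> \<le> inverse r * norm (A y v - f y)" using B(3) by (rule mult_right_mono) simp
    also have "\<dots> = resid A f v y / r" by (simp add: resid_def divide_inverse mult.commute)
    finally show ?thesis using infdist_le[OF mem, of v] by (simp add: dist_norm)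
  qed
  have Mne: "?M \<noteq> {}"
  proof -
    obtain y where "y \<in> Y" using Y_ne by blast
    then show ?thesis using Binv unfolding solman_def by blast
  qed
  have close: "\<exists>a\<in>?M. dist x a < s" if "infdist x ?M < s" for x s
  proof (rule ccontr)
    assume "\<not> ?thesis"
    then have "\<forall>a\<in>?M. s \<le> dist x a" by auto
    then have "s \<le> infdist x ?M" unfolding infdist_notempty[OF Mne] by (intro cINF_greatest[OF Mne]) auto
    then show False using that by simp
  qed
  have r0: "resid A f (useq 0) (yseq 0) \<le> R * \<rho>"
  proof (rule field_le_epsilon)
    fix s :: real assume s: "0 < s"
    have Rmu: "0 < R * \<mu>" using rR mu_ge by simp
    define t where "t = s / (R * \<mu>)"
    have t0: "0 < t" using s Rmu by (simp add: t_def)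
    have "infdist u ?M < eps_model + t" using u_model t0 by simp
    then obtain ub where ub: "ub \<in> ?M" "dist u ub < eps_model + t" using close by blast
    obtain yb where yb: "yb \<in> Y" "A yb ub = f yb" using ub(1) unfolding solman_def by blast
    obtain k' where k': "k' \<in> {1..K}" "ub \<in> Mk k'" using ub(1) family_union by blast
    have Vk: "fin_dim_subspace (Vbar k')" using Vbar_sub k' by blast
    have muk: "mu_const (Vbar k') W \<le> ereal \<mu>" using admissible k'(1) by blast
    have mub: "\<forall>x\<in>Vbar k'. norm x \<le> \<mu> * norm (?P x)"
    proof
      fix x assume "x \<in> Vbar k'"
      then show "norm x \<le> \<mu> * norm (?P x)" by (rule mu_bound[OF muk _ mu_ge])
    qed
    have usk1: "ustark k' \<in> affW W w" using ustark_def k'(1) by blast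
    have usk2: "\<forall>v\<in>affW W w. infdist (ustark k') {ubar k' + x | x. x \<in> Vbar k'}
                          \<le> infdist v {ubar k' + x | x. x \<in> Vbar k'}" using ustark_def k'(1) by blast
    have e1: "infdist ub {ubar k' + x | x. x \<in> Vbar k'} \<le> \<epsilon>"
      using epsk_bound admissible k' by (meson order_trans)
    have "?P ub - w = ?P (ub - u) - \<eta>" using w_def proj_diff[OF W_sub, of ub u] by simp
    then have "norm (?P ub - w) \<le> norm (?P (ub - u)) + norm \<eta>" by (metis norm_triangle_ineq4)
    also have "\<dots> \<le> norm (ub - u) + eps_noise" using proj_norm_le[OF W_sub] eta_noise by (rule add_mono)
    finally have e2: "norm (?P ub - w) \<le> eps_model + t + eps_noise" using ub(2) by (simp add: dist_norm norm_minus_commute)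
    have pb: "norm (ub - ustark k') \<le> \<mu> * (infdist ub {ubar k' + x | x. x \<in> Vbar k'} + norm (?P ub - w))"
      by (rule pbdw[OF W_sub Vk mub mu_ge wW usk1 usk2])
    have pb2: "norm (ub - ustark k') \<le> \<mu> * (\<epsilon> + (eps_model + t + eps_noise))"
    proof -
      have "infdist ub {ubar k' + x | x. x \<in> Vbar k'} + norm (?P ub - w) \<le> \<epsilon> + (eps_model + t + eps_noise)"
        using e1 e2 by (rule add_mono)
      then have "\<mu> * (infdist ub {ubar k' + x | x. x \<in> Vbar k'} + norm (?P ub - w)) \<le> \<mu> * (\<epsilon> + (eps_model + t + eps_noise))"
        by (rule mult_left_mono) (use mu_ge in simp)
      then show ?thesis using pb by linarith
    qed
    have bdd: "bdd_below ((\<lambda>y. resid A f v y) ` Y)" for v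
      by (rule bdd_belowI[of _ 0]) (auto simp: resid_def)
    have "resid A f (useq 0) (yseq 0) \<le> surrogate Y A f (ustark kstar)"
      unfolding surrogate_def u0 using y0 by (intro cINF_greatest[OF Y_ne]) auto
    also have "\<dots> \<le> surrogate Y A f (ustark k')" using kstar_def k' by blast
    also have "\<dots> \<le> resid A f (ustark k') yb" unfolding surrogate_def by (rule cINF_lower[OF bdd yb(1)])
    also have "\<dots> = norm (A yb (ustark k' - ub))" using yb(2) by (simp add: resid_def blinfun.diff_right)
    also have "\<dots> \<le> norm (A yb) * norm (ustark k' - ub)" by (rule norm_blinfun)
    also have "\<dots> \<le> R * (\<mu> * (\<epsilon> + (eps_model + t + eps_noise)))"
      using A_bound yb(1) pb2 rR by (intro mult_mono) (simp_all add: norm_minus_commute)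
    also have "\<dots> = R * (\<mu> * (\<epsilon> + eps_model + eps_noise)) + R * \<mu> * t" by (simp add: algebra_simps)
    also have "\<dots> = R * (\<mu> * (\<epsilon> + eps_model + eps_noise)) + s" using rR mu_ge by (simp add: t_def)
    also have "\<dots> \<le> R * \<rho> + s"
    proof -
      have "\<mu> * (\<epsilon> + eps_model + eps_noise) \<le> \<rho>" unfolding \<rho>_def using em0 by (simp add: algebra_simps)
      then have "R * (\<mu> * (\<epsilon> + eps_model + eps_noise)) \<le> R * \<rho>" by (rule mult_left_mono) (use rR in simp)
      then show ?thesis by simp
    qed
    finally show "resid A f (useq 0) (yseq 0) \<le> R * \<rho> + s" .
  qed
  have rho0: "eps_model + eps_noise \<le> \<rho>"
  proof -
    have a1: "1 * eps_noise \<le> \<mu> * eps_noise" by (rule mult_right_mono[OF mu_ge en0])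
    have a2: "\<mu> * eps_noise \<le> \<mu> * (\<epsilon> + eps_noise)" by (rule mult_left_mono) (use mu_ge eps_pos in simp_all)
    have "eps_noise \<le> \<mu> * (\<epsilon> + eps_noise)" using a1 a2 by simp
    moreover have "eps_model \<le> (\<mu> + 1) * eps_model" using mu_ge em0 by (simp add: algebra_simps)
    ultimately show ?thesis unfolding \<rho>_def by simp
  qed
  have kap: "\<rho> \<le> (R / r) * \<rho>"
  proof -
    have "1 \<le> R / r" using rR by simp
    moreover have "0 \<le> \<rho>" using rho0 em0 en0 by simp
    ultimately have "1 * \<rho> \<le> (R / r) * \<rho>" by (rule mult_right_mono)
    then show ?thesis by simp
  qed
  let ?\<sigma> = "(R / r) * \<rho>"
  have uk_in: "useq k \<in> Msig ?M ?\<sigma>" for k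
  proof -
    have "infdist (useq k) ?M \<le> resid A f (useq k) (yseq k) / r" by (rule dist_bound[OF yY])
    also have "\<dots> \<le> (R * \<rho>) / r" using to0[of k] r0 rR by (intro divide_right_mono) simp_all
    finally show ?thesis unfolding Msig_def by simp
  qed
  have ue_in: "u + \<eta> \<in> Msig ?M ?\<sigma>"
  proof -
    have "infdist (u + \<eta>) ?M \<le> infdist u ?M + dist (u + \<eta>) u" by (rule infdist_triangle)
    also have "\<dots> \<le> eps_model + eps_noise" using u_model eta_noise by (simp add: dist_norm)
    finally show ?thesis using rho0 kap unfolding Msig_def by simp
  qed
  obtain C where C: "\<forall>y\<in>Y. norm (f y) \<le> C"
  proof -
    have "compact (f ` Y)" by (rule compact_continuous_image[OF f_cont Y_compact])
    then have "bounded (f ` Y)" by (rule compact_imp_bounded)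
    then show ?thesis using that unfolding bounded_iff by blast
  qed
  have Mbd: "norm m \<le> C / r" if mM: "m \<in> ?M" for m
  proof -
    obtain y where y: "y \<in> Y" "A y m = f y" using mM unfolding solman_def by blast
    obtain B :: "'z \<Rightarrow>\<^sub>L 'v" where B: "\<forall>v. blinfun_apply B (A y v) = v" "norm B \<le> inverse r"
      using Binv[OF y(1)] by blast
    have "m = blinfun_apply B (f y)" using B(1) y(2) by metis
    then have "norm m \<le> norm B * norm (f y)" by (simp add: norm_blinfun)
    also have "\<dots> \<le> inverse r * C" using B(2) C y(1) rR by (intro mult_mono) auto
    finally show ?thesis by (simp add: divide_inverse mult.commute)
  qed
  have Sbd: "norm v \<le> C / r + ?\<sigma> + 1" if "v \<in> Msig ?M ?\<sigma>" for v
  proof -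
    have "infdist v ?M < ?\<sigma> + 1" using that unfolding Msig_def by simp
    then obtain m where m: "m \<in> ?M" "dist v m < ?\<sigma> + 1" using close by blast
    have "norm v \<le> norm m + norm (v - m)" by (rule norm_triangle_sub)
    then show ?thesis using Mbd[OF m(1)] m(2) by (simp add: dist_norm)
  qed
  have bdd: "bdd_above {norm (a - b) | a b. a \<in> Msig ?M ?\<sigma> \<and> b \<in> Msig ?M ?\<sigma> \<and> a - b \<in> orthogonal_comp W}"
  proof (rule bdd_aboveI)
    fix x assume "x \<in> {norm (a - b) | a b. a \<in> Msig ?M ?\<sigma> \<and> b \<in> Msig ?M ?\<sigma> \<and> a - b \<in> orthogonal_comp W}"
    then obtain a b where ab: "x = norm (a - b)" "a \<in> Msig ?M ?\<sigma>" "b \<in> Msig ?M ?\<sigma>" by blast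
    have "norm (a - b) \<le> norm a + norm b" by (rule norm_triangle_ineq4)
    then show "x \<le> 2 * (C / r + ?\<sigma> + 1)" using ab Sbd[OF ab(2)] Sbd[OF ab(3)] by simp
  qed
  have final: "norm (u - useq k) \<le> delta ?M W ?\<sigma> + eps_noise" for k
  proof -
    obtain ov where ov: "ov \<in> orthogonal_comp W" "useq k = w + ov" using uaff[of k] unfolding affW_def by blast
    have diff: "u + \<eta> - useq k = (u - ?P u) - ov" using ov(2) w_def by simp
    have "u + \<eta> - useq k \<in> orthogonal_comp W"
      unfolding diff using subspace_diff[OF subspace_orthogonal_comp perpW[of u] ov(1)] .
    then have "norm (u + \<eta> - useq k) \<le> delta ?M W ?\<sigma>"
      unfolding delta_def using ue_in uk_in[of k] by (intro cSup_upper[OF _ bdd]) blast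
    moreover have "norm (u - useq k) \<le> norm (u + \<eta> - useq k) + norm \<eta>"
    proof -
      have "u - useq k = (u + \<eta> - useq k) - \<eta>" by simp
      then show ?thesis by (metis norm_triangle_ineq4)
    qed
    ultimately show ?thesis using eta_noise by simp
  qed
  show ?thesis using mono final unfolding \<rho>_def by blast
qed


end
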